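(* Every unbounded moral-hazard preference $\succeq$ on $W$ admits exactly one parsimonious representation $(c,u)$.
   Context: $S$ non-empty finite, $\Delta(S)$ its simplex; $\Pi\subseteq\mathbb{R}$ convex; $\Delta(\Pi)$ finite-support distributions on $\Pi$; contracts $w:S\to\Delta(\Pi)$, set $W$; constant contracts identified with elements of $\Delta(\Pi)$. Mixtures $\alpha x+(1-\alpha)x'$ are probability mixtures. $u:\Pi\to\mathbb{R}$ extends to $\Delta(\Pi)$ by expectation. Fixed reference prizes $\pi_0<\pi_1$ in $\Pi$; $u$ is normalised iff $\{u(\pi_0),u(\pi_1)\}=\{0,1\}$. Grounded: infimum $0$. A parsimonious representation of $\succeq$ is a pair $(c,u)$ with $c:\Delta(S)\to[0,\infty]$ grounded, convex and lower semi-continuous and $u:\Pi\to\mathbb{R}$ strictly increasing and normalised, such that for all $w,w'\in W$: $w\succeq w'$ iff $\max_{p\in\Delta(S)}[-c(p)+\sum_s u(w(s))p(s)]\ge \max_{p\in\Delta(S)}[-c(p)+\sum_s u(w'(s))p(s)]$. A moral-hazard preference is a relation generated by a standard moral-hazard model (compact convex effort set $E\subseteq\mathbb{R}^n$, grounded lsc cost $C:E\to\mathbb{R}_+$, continuous $e\mapsto P_e\in\Delta(S)$, strictly increasing normalised $u$, agent valuing $w$ by $\sup_{\mu\in\Delta(E)}\int_E[-C(e)+\sum_s u(w(s))P_e(s)]\mu(\mathrm{d}e)$); equivalently, a relation admitting some parsimonious representation. $\succeq$ is unbounded iff there are $x\succ y$ in $\Delta(\Pi)$ such that for every $\alpha\in(0,1)$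 there exist $z,z'\in\Delta(\Pi)$ with $y\succ \alpha z+(1-\alpha)x$ and $\alpha z'+(1-\alpha)y\succ x$ (where $\succ$ is the strict part of $\succeq$). *)

theory Defs
  imports "HOL-Analysis.Analysis"
begin

text \<open>Finite-support probability distributions on a prize set \<open>P\<close>,
  represented as functions real => real (probability mass at each prize).\<close>

definition supp :: "(real \<Rightarrow> real) \<Rightarrow> real set" where
  "supp q = {x. q x \<noteq> 0}"

definition lotteries :: "real set \<Rightarrow> (real \<Rightarrow> real) set" where
  "lotteries P = {q. finite (supp q) \<and> supp q \<subseteq> P \<and> (\<forall>x. 0 \<le> q x)
                      \<and> (\<Sum>x\<in>supp q. q x) = 1}"

definition mix :: "real \<Rightarrow> (real \<Rightarrow> real) \<Rightarrow> (real \<Rightarrow> real) \<Rightarrow> (real \<Rightarrow> real)" where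
  "mix a q q' = (\<lambda>x. a * q x + (1 - a) * q' x)"

definition contracts :: "real set \<Rightarrow> ('s \<Rightarrow> (real \<Rightarrow> real)) set" where
  "contracts P = {w. \<forall>s. w s \<in> lotteries P}"

definition const :: "(real \<Rightarrow> real) \<Rightarrow> ('s \<Rightarrow> (real \<Rightarrow> real))" where
  "const q = (\<lambda>_. q)"

definition prob_simplex :: "('s::finite \<Rightarrow> real) set" where
  "prob_simplex = {p. (\<forall>s. 0 \<le> p s) \<and> (\<Sum>s\<in>UNIV. p s) = 1}"

definition EU :: "(real \<Rightarrow> real) \<Rightarrow> (real \<Rightarrow> real) \<Rightarrow> real" where
  "EU u q = (\<Sum>x\<in>supp q. q x * u x)"

definition grounded :: "(('s::finite \<Rightarrow> real) \<Rightarrow> ereal) \<Rightarrow> bool" where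
  "grounded c \<longleftrightarrow> (INF p\<in>prob_simplex. c p) = 0"

definition convex_cost :: "(('s::finite \<Rightarrow> real) \<Rightarrow> ereal) \<Rightarrow> bool" where
  "convex_cost c \<longleftrightarrow> (\<forall>p\<in>prob_simplex. \<forall>q\<in>prob_simplex. \<forall>a::real. 0 \<le> a \<and> a \<le> 1 \<longrightarrow>
      c (\<lambda>s. a * p s + (1 - a) * q s) \<le> ereal a * c p + ereal (1 - a) * c q)"

definition lsc_cost :: "(('s::finite \<Rightarrow> real) \<Rightarrow> ereal) \<Rightarrow> bool" where
  "lsc_cost c \<longleftrightarrow> (\<forall>p\<in>prob_simplex. \<forall>X. (\<forall>n. X n \<in> prob_simplex) \<longrightarrow>
      (\<forall>s. (\<lambda>n. X n s) \<longlonglongrightarrow> p s) \<longrightarrow> c p \<le> liminf (\<lambda>n. c (X n)))"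

text \<open>Value of a contract: \<open>max_p [-c(p) + \<Sum>_s u(w(s)) p(s)]\<close> (the max exists since c is lsc
  and the prob_simplex is compact, so it coincides with the supremum).\<close>
definition contract_value :: "(('s::finite \<Rightarrow> real) \<Rightarrow> ereal) \<Rightarrow> (real \<Rightarrow> real) \<Rightarrow> ('s \<Rightarrow> (real \<Rightarrow> real)) \<Rightarrow> ereal" where
  "contract_value c u w = (SUP p\<in>prob_simplex. - c p + ereal (\<Sum>s\<in>UNIV. EU u (w s) * p s))"

definition parsimonious_rep ::
  "real set \<Rightarrow> real \<Rightarrow> real \<Rightarrow> (('s::finite \<Rightarrow> (real \<Rightarrow> real)) \<Rightarrow> ('s \<Rightarrow> (real \<Rightarrow> real)) \<Rightarrow> bool)
   \<Rightarrow> (('s \<Rightarrow> real) \<Rightarrow> ereal) \<Rightarrow> (real \<Rightarrow> real) \<Rightarrow> bool" where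
  "parsimonious_rep P \<pi>0 \<pi>1 R c u \<longleftrightarrow>
     (\<forall>p\<in>prob_simplex. 0 \<le> c p) \<and> grounded c \<and> convex_cost c \<and> lsc_cost c \<and>
     strict_mono_on P u \<and> {u \<pi>0, u \<pi>1} = {0, 1} \<and>
     (\<forall>w\<in>contracts P. \<forall>w'\<in>contracts P. R w w' \<longleftrightarrow> contract_value c u w \<ge> contract_value c u w')"

text \<open>Moral-hazard preference: equivalently, a relation admitting some parsimonious representation.\<close>
definition moral_hazard_pref ::
  "real set \<Rightarrow> real \<Rightarrow> real \<Rightarrow> (('s::finite \<Rightarrow> (real \<Rightarrow> real)) \<Rightarrow> ('s \<Rightarrow> (real \<Rightarrow> real)) \<Rightarrow> bool) \<Rightarrow> bool" where
  "moral_hazard_pref P \<pi>0 \<pi>1 R \<longleftrightarrow> (\<exists>c u. parsimonious_rep P \<pi>0 \<pi>1 R c u)"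

definition strict_pref :: "('w \<Rightarrow> 'w \<Rightarrow> bool) \<Rightarrow> 'w \<Rightarrow> 'w \<Rightarrow> bool" where
  "strict_pref R a b \<longleftrightarrow> R a b \<and> \<not> R b a"

definition unbounded ::
  "real set \<Rightarrow> (('s \<Rightarrow> (real \<Rightarrow> real)) \<Rightarrow> ('s \<Rightarrow> (real \<Rightarrow> real)) \<Rightarrow> bool) \<Rightarrow> bool" where
  "unbounded P R \<longleftrightarrow>
    (\<exists>x\<in>lotteries P. \<exists>y\<in>lotteries P. strict_pref R (const x) (const y) \<and>
      (\<forall>a. 0 < a \<and> a < 1 \<longrightarrow>
        (\<exists>z\<in>lotteries P. \<exists>z'\<in>lotteries P.
           strict_pref R (const y) (const (mix a z x)) \<and>
           strict_pref R (const (mix a z' y)) (const x))))"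

end

theory Submission
  imports Defs
begin


lemma sum_supp_eq:
  assumes "finite F" "supp q \<subseteq> F"
  shows "(\<Sum>x\<in>supp q. f x * q x) = (\<Sum>x\<in>F. f x * q x)"
  by (rule sum.mono_neutral_left) (use assms in \<open>auto simp: supp_def\<close>)

lemma lot_sumF:
  assumes "q \<in> lotteries P" "finite F" "supp q \<subseteq> F"
  shows "(\<Sum>x\<in>F. q x) = 1"
proof -
  have "(\<Sum>x\<in>F. q x) = (\<Sum>x\<in>supp q. q x)"
    by (rule sum.mono_neutral_right) (use assms in \<open>auto simp: supp_def\<close>)
  then show ?thesis using assms by (simp add: lotteries_def)
qed

lemma EU_F:
  assumes "finite F" "supp q \<subseteq> F"
  shows "EU u q = (\<Sum>x\<in>F. q x * u x)"
  unfolding EU_def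
  by (rule sum.mono_neutral_left) (use assms in \<open>auto simp: supp_def\<close>)

lemma supp_mix: "supp (mix a q q') \<subseteq> supp q \<union> supp q'"
  by (auto simp: supp_def mix_def)

lemma mix_lottery:
  assumes "q \<in> lotteries P" "q' \<in> lotteries P" "0 \<le> a" "a \<le> 1"
  shows "mix a q q' \<in> lotteries P"
proof -
  let ?F = "supp q \<union> supp q'"
  have fin: "finite ?F" using assms by (auto simp: lotteries_def)
  have s1: "(\<Sum>x\<in>?F. q x) = 1" by (rule lot_sumF[OF assms(1) fin]) auto
  have s2: "(\<Sum>x\<in>?F. q' x) = 1" by (rule lot_sumF[OF assms(2) fin]) auto
  have "(\<Sum>x\<in>supp (mix a q q'). mix a q q' x) = (\<Sum>x\<in>?F. mix a q q' x)"
    by (rule sum.mono_neutral_left) (use fin supp_mix[of a q q'] in \<open>auto simp: supp_def\<close>)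
  also have "\<dots> = a * (\<Sum>x\<in>?F. q x) + (1 - a) * (\<Sum>x\<in>?F. q' x)"
    unfolding mix_def by (simp only: sum.distrib sum_distrib_left)
  also have "\<dots> = 1" using s1 s2 by simp
  finally have "(\<Sum>x\<in>supp (mix a q q'). mix a q q' x) = 1" .
  moreover have "finite (supp (mix a q q'))" by (rule finite_subset[OF supp_mix fin])
  moreover have "supp (mix a q q') \<subseteq> P"
  proof -
    have "supp q \<subseteq> P" "supp q' \<subseteq> P" using assms(1,2) by (simp_all add: lotteries_def)
    then show ?thesis using supp_mix[of a q q'] by blast
  qed
  moreover have "\<forall>x. 0 \<le> mix a q q' x"
  proof
    fix x
    have "0 \<le> q x" "0 \<le> q' x" using assms by (auto simp: lotteries_def)
    then show "0 \<le> mix a q q' x" unfolding mix_def using assms(3,4)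
      by (intro add_nonneg_nonneg mult_nonneg_nonneg) auto
  qed
  ultimately show ?thesis by (simp add: lotteries_def)
qed

lemma EU_mix:
  assumes "q \<in> lotteries P" "q' \<in> lotteries P"
  shows "EU u (mix a q q') = a * EU u q + (1 - a) * EU u q'"
proof -
  let ?F = "supp q \<union> supp q'"
  have fin: "finite ?F" using assms by (auto simp: lotteries_def)
  have "EU u (mix a q q') = (\<Sum>x\<in>?F. mix a q q' x * u x)" by (rule EU_F[OF fin supp_mix])
  also have "\<dots> = (\<Sum>x\<in>?F. a * (q x * u x) + (1 - a) * (q' x * u x))"
    by (rule sum.cong) (simp_all add: mix_def distrib_right)
  also have "\<dots> = a * (\<Sum>x\<in>?F. q x * u x) + (1 - a) * (\<Sum>x\<in>?F. q' x * u x)"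
    by (simp only: sum.distrib sum_distrib_left)
  also have "\<dots> = a * EU u q + (1 - a) * EU u q'"
    using EU_F[OF fin, of q u] EU_F[OF fin, of q' u] by simp
  finally show ?thesis .
qed

definition delta :: "real \<Rightarrow> real \<Rightarrow> real" where
  "delta x = (\<lambda>t. if t = x then 1 else 0)"

lemma supp_delta: "supp (delta x) = {x}" by (auto simp: supp_def delta_def)

lemma delta_lottery: "x \<in> P \<Longrightarrow> delta x \<in> lotteries P"
  by (auto simp: lotteries_def supp_delta) (auto simp: delta_def)

lemma EU_delta: "EU u (delta x) = u x"
  unfolding EU_def supp_delta by (simp add: delta_def)

lemma EU_cong:
  assumes "q \<in> lotteries P" "\<forall>x\<in>P. u' x = u x"
  shows "EU u' q = EU u q"
  using assms unfolding EU_def lotteries_def by (auto intro!: sum.cong)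



definition V :: "(('s::finite \<Rightarrow> real) \<Rightarrow> ereal) \<Rightarrow> ('s \<Rightarrow> real) \<Rightarrow> ereal" where
  "V c U = (SUP p\<in>prob_simplex. - c p + ereal (\<Sum>s\<in>UNIV. U s * p s))"

lemma contract_value_V: "contract_value c u w = V c (\<lambda>s. EU u (w s))"
  by (simp add: contract_value_def V_def)

lemma simplex_le1: "p \<in> prob_simplex \<Longrightarrow> p s \<le> 1"
proof -
  assume p: "p \<in> prob_simplex"
  have "p s \<le> sum p UNIV" by (rule member_le_sum) (use p in \<open>auto simp: prob_simplex_def\<close>)
  then show ?thesis using p by (simp add: prob_simplex_def)
qed

lemma grounded_ex: "grounded c \<Longrightarrow> \<exists>p\<in>prob_simplex. c p < 1"
proof -
  assume "grounded c"
  then have "(INF p\<in>prob_simplex. c p) < 1" by (simp add: grounded_def)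
  then show ?thesis by (simp add: INF_less_iff)
qed

lemma V_const:
  fixes c :: "('s::finite \<Rightarrow> real) \<Rightarrow> ereal"
  assumes nn: "\<forall>p\<in>prob_simplex. 0 \<le> c p" and g: "grounded c"
  shows "V c (\<lambda>s. k) = ereal k"
proof -
  have ne: "prob_simplex \<noteq> ({} :: ('s \<Rightarrow> real) set)" using grounded_ex[OF g] by auto
  have "V c (\<lambda>s. k) = (SUP p\<in>prob_simplex. - c p + ereal k)"
    unfolding V_def
    by (rule SUP_cong) (auto simp: prob_simplex_def sum_distrib_left[symmetric])
  also have "\<dots> = (SUP p\<in>prob_simplex. - c p) + ereal k"
    by (rule SUP_ereal_add_left[OF ne]) simp
  also have "\<dots> = - (INF p\<in>prob_simplex. c p) + ereal k"
    by (simp add: ereal_SUP_uminus_eq)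
  also have "\<dots> = ereal k" using g by (simp add: grounded_def)
  finally show ?thesis .
qed

lemma V_finite:
  fixes c :: "('s::finite \<Rightarrow> real) \<Rightarrow> ereal"
  assumes nn: "\<forall>p\<in>prob_simplex. 0 \<le> c p" and g: "grounded c"
  shows "\<exists>k. V c U = ereal k"
proof -
  obtain p1 where p1: "p1 \<in> prob_simplex" "c p1 < 1" using grounded_ex[OF g] by blast
  have up: "V c U \<le> ereal (\<Sum>s\<in>UNIV. \<bar>U s\<bar>)"
    unfolding V_def
  proof (rule SUP_least)
    fix p :: "'s \<Rightarrow> real" assume p: "p \<in> prob_simplex"
    have "(\<Sum>s\<in>UNIV. U s * p s) \<le> (\<Sum>s\<in>UNIV. \<bar>U s\<bar>)"
    proof (rule sum_mono)
      fix s
      have "0 \<le> p s" "p s \<le> 1" using p simplex_le1[OF p] by (auto simp: prob_simplex_def)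
      then have "U s * p s \<le> \<bar>U s\<bar> * p s" by (intro mult_right_mono) auto
      also have "\<dots> \<le> \<bar>U s\<bar>" using \<open>p s \<le> 1\<close> by (intro mult_left_le) auto
      finally show "U s * p s \<le> \<bar>U s\<bar>" .
    qed
    moreover have "- c p \<le> 0" using nn p by simp
    ultimately show "- c p + ereal (\<Sum>s\<in>UNIV. U s * p s) \<le> ereal (\<Sum>s\<in>UNIV. \<bar>U s\<bar>)"
      using add_mono[of "- c p" 0 "ereal (\<Sum>s\<in>UNIV. U s * p s)" "ereal (\<Sum>s\<in>UNIV. \<bar>U s\<bar>)"]
      by simp
  qed
  have lo: "- c p1 + ereal (\<Sum>s\<in>UNIV. U s * p1 s) \<le> V c U"
    unfolding V_def using p1(1) by (rule SUP_upper)
  have "c p1 \<noteq> \<infinity>" using p1 by auto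
  moreover have "c p1 \<noteq> -\<infinity>" using nn p1 by auto
  ultimately have "- c p1 + ereal (\<Sum>s\<in>UNIV. U s * p1 s) \<noteq> -\<infinity>" by auto
  with lo have "V c U \<noteq> -\<infinity>" by auto
  moreover from up have "V c U \<noteq> \<infinity>" by auto
  ultimately show ?thesis by (cases "V c U") auto
qed

lemma rep_norm:
  assumes "parsimonious_rep P \<pi>0 \<pi>1 R c u" "\<pi>0 \<in> P" "\<pi>1 \<in> P" "\<pi>0 < \<pi>1"
  shows "u \<pi>0 = 0" "u \<pi>1 = 1"
proof -
  have "u \<pi>0 < u \<pi>1" using assms by (auto simp: parsimonious_rep_def strict_mono_on_def)
  moreover have "{u \<pi>0, u \<pi>1} = {0, 1}" using assms by (simp add: parsimonious_rep_def)
  ultimately show "u \<pi>0 = 0" "u \<pi>1 = 1" by (auto simp: doubleton_eq_iff)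
qed

lemma const_contract: "q \<in> lotteries P \<Longrightarrow> const q \<in> contracts P"
  by (simp add: const_def contracts_def)

lemma rep_const:
  assumes "parsimonious_rep P \<pi>0 \<pi>1 R c u" "q \<in> lotteries P" "q' \<in> lotteries P"
  shows "R (const q) (const q') \<longleftrightarrow> EU u q \<ge> EU u q'"
proof -
  have nn: "\<forall>p\<in>prob_simplex. 0 \<le> c p" and g: "grounded c"
    using assms by (auto simp: parsimonious_rep_def)
  have cv: "contract_value c u (const x) = ereal (EU u x)" for x
    unfolding contract_value_V const_def using V_const[OF nn g] by simp
  have "R (const q) (const q') \<longleftrightarrow> contract_value c u (const q') \<le> contract_value c u (const q)"
    using assms const_contract[OF assms(2)] const_contract[OF assms(3)]
    unfolding parsimonious_rep_def by blast
  then show ?thesis unfolding cv by simp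
qed



lemma cv_const:
  assumes "parsimonious_rep P \<pi>0 \<pi>1 R c u"
  shows "contract_value c u (const q) = ereal (EU u q)"
proof -
  have nn: "\<forall>p\<in>prob_simplex. 0 \<le> c p" and g: "grounded c"
    using assms by (auto simp: parsimonious_rep_def)
  show ?thesis unfolding contract_value_V const_def using V_const[OF nn g] by simp
qed

lemma rep_iff:
  assumes "parsimonious_rep P \<pi>0 \<pi>1 R c u" "w \<in> contracts P" "w' \<in> contracts P"
  shows "R w w' \<longleftrightarrow> contract_value c u w' \<le> contract_value c u w"
proof -
  have "\<forall>w\<in>contracts P. \<forall>w'\<in>contracts P. R w w' \<longleftrightarrow> contract_value c u w \<ge> contract_value c u w'"
    using assms(1) unfolding parsimonious_rep_def by (elim conjE)
  then show ?thesis using assms(2,3) by blast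
qed

lemma u_unique:
  assumes r1: "parsimonious_rep P \<pi>0 \<pi>1 R c u" and r2: "parsimonious_rep P \<pi>0 \<pi>1 R c' u'"
    and P: "\<pi>0 \<in> P" "\<pi>1 \<in> P" "\<pi>0 < \<pi>1" and x: "x \<in> P"
  shows "u' x = u x"
proof -
  have eqv: "EU u' q = EU u' q'" if "q \<in> lotteries P" "q' \<in> lotteries P" "EU u q = EU u q'" for q q'
  proof -
    have "R (const q) (const q')" "R (const q') (const q)"
      using rep_const[OF r1 that(1,2)] rep_const[OF r1 that(2,1)] that(3) by auto
    then show ?thesis using rep_const[OF r2 that(1,2)] rep_const[OF r2 that(2,1)] by auto
  qed
  note n1 = rep_norm[OF r1 P] and n2 = rep_norm[OF r2 P]
  have d: "delta x \<in> lotteries P" "delta \<pi>0 \<in> lotteries P" "delta \<pi>1 \<in> lotteries P"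
    using x P by (auto intro: delta_lottery)
  define t where "t = u x"
  consider "0 \<le> t" "t \<le> 1" | "1 < t" | "t < 0" by linarith
  then show ?thesis
  proof cases
    case 1
    let ?q = "mix t (delta \<pi>1) (delta \<pi>0)"
    have q: "?q \<in> lotteries P" using mix_lottery[OF d(3) d(2)] 1 by simp
    have "EU u ?q = t" using EU_mix[OF d(3) d(2)] n1 by (simp add: EU_delta)
    then have "EU u (delta x) = EU u ?q" by (simp add: EU_delta t_def)
    from eqv[OF d(1) q this] have "u' x = EU u' ?q" by (simp add: EU_delta)
    also have "\<dots> = t" using EU_mix[OF d(3) d(2)] n2 by (simp add: EU_delta)
    finally show ?thesis by (simp add: t_def)
  next
    case 2
    let ?q = "mix (1/t) (delta x) (delta \<pi>0)"
    have q: "?q \<in> lotteries P" using mix_lottery[OF d(1) d(2)] 2 by simp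
    have "EU u ?q = 1" using EU_mix[OF d(1) d(2)] n1 2 by (simp add: EU_delta t_def)
    then have "EU u ?q = EU u (delta \<pi>1)" using n1 by (simp add: EU_delta)
    from eqv[OF q d(3) this] have "EU u' ?q = 1" using n2 by (simp add: EU_delta)
    then have "(1/t) * u' x = 1" using EU_mix[OF d(1) d(2)] n2 by (simp add: EU_delta)
    then show ?thesis using 2 by (simp add: t_def field_simps)
  next
    case 3
    define a where "a = 1 / (1 - t)"
    have a: "0 < a" "a < 1" using 3 by (auto simp: a_def field_simps)
    have at: "a * t + (1 - a) = 0" using 3 by (simp add: a_def field_simps)
    let ?q = "mix a (delta x) (delta \<pi>1)"
    have q: "?q \<in> lotteries P" using mix_lottery[OF d(1) d(3)] a by simp
    have "EU u ?q = 0" using EU_mix[OF d(1) d(3)] n1 at by (simp add: EU_delta t_def)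
    then have "EU u ?q = EU u (delta \<pi>0)" using n1 by (simp add: EU_delta)
    from eqv[OF q d(2) this] have "EU u' ?q = 0" using n2 by (simp add: EU_delta)
    then have "a * u' x + (1 - a) = 0" using EU_mix[OF d(1) d(3)] n2 by (simp add: EU_delta)
    with at a have "a * u' x = a * t" by linarith
    then show ?thesis using a by (simp add: t_def)
  qed
qed

lemma realize:
  assumes r: "parsimonious_rep P \<pi>0 \<pi>1 R c u" and ub: "unbounded P R"
  shows "\<exists>q\<in>lotteries P. EU u q = t"
proof -
  obtain x y where xy: "x \<in> lotteries P" "y \<in> lotteries P" "strict_pref R (const x) (const y)"
    and H: "\<And>a. 0 < a \<Longrightarrow> a < 1 \<Longrightarrow> \<exists>z\<in>lotteries P. \<exists>z'\<in>lotteries P.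
           strict_pref R (const y) (const (mix a z x)) \<and> strict_pref R (const (mix a z' y)) (const x)"
    using ub unfolding unbounded_def by blast
  define ex where "ex = EU u x"
  define ey where "ey = EU u y"
  have dxy: "ey < ex" using xy rep_const[OF r xy(1,2)] rep_const[OF r xy(2,1)]
    by (auto simp: strict_pref_def ex_def ey_def)
  define d where "d = ex - ey"
  define K where "K = d + \<bar>t\<bar> + \<bar>ex\<bar> + \<bar>ey\<bar> + 1"
  define a where "a = d / K"
  have d0: "0 < d" using dxy by (simp add: d_def)
  have K0: "d < K" by (simp add: K_def)
  have a: "0 < a" "a < 1" using d0 K0 by (auto simp: a_def field_simps)
  obtain z z' where z: "z \<in> lotteries P" "z' \<in> lotteries P"
    "strict_pref R (const y) (const (mix a z x))" "strict_pref R (const (mix a z' y)) (const x)"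
    using H[OF a] by blast
  have m1: "mix a z x \<in> lotteries P" using mix_lottery[OF z(1) xy(1)] a by simp
  have m2: "mix a z' y \<in> lotteries P" using mix_lottery[OF z(2) xy(2)] a by simp
  have i1: "a * EU u z + (1 - a) * ex < ey"
    using z(3) rep_const[OF r xy(2) m1] rep_const[OF r m1 xy(2)] EU_mix[OF z(1) xy(1)]
    by (auto simp: strict_pref_def ex_def ey_def)
  have i2: "ex < a * EU u z' + (1 - a) * ey"
    using z(4) rep_const[OF r xy(1) m2] rep_const[OF r m2 xy(1)] EU_mix[OF z(2) xy(2)]
    by (auto simp: strict_pref_def ex_def ey_def)
  have K0': "0 < K" using d0 K0 by simp
  have j1: "d * EU u z + (K - d) * ex < K * ey"
  proof -
    have "K * (a * EU u z + (1 - a) * ex) < K * ey" using i1 K0' by simp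
    moreover have "K * (a * EU u z + (1 - a) * ex) = d * EU u z + (K - d) * ex"
      using K0' by (simp add: a_def field_simps)
    ultimately show ?thesis by simp
  qed
  have j2: "K * ex < d * EU u z' + (K - d) * ey"
  proof -
    have "K * ex < K * (a * EU u z' + (1 - a) * ey)" using i2 K0' by simp
    moreover have "K * (a * EU u z' + (1 - a) * ey) = d * EU u z' + (K - d) * ey"
      using K0' by (simp add: a_def field_simps)
    ultimately show ?thesis by simp
  qed
  have "d * EU u z < d * (ex - K)" using j1 by (simp add: d_def algebra_simps)
  then have "EU u z < ex - K" using d0 by simp
  then have e1: "EU u z \<le> t" unfolding K_def using d0 by linarith
  have "d * (ey + K) < d * EU u z'" using j2 by (simp add: d_def algebra_simps)
  then have "ey + K < EU u z'" using d0 by simp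
  then have e2: "t \<le> EU u z'" unfolding K_def using d0 by linarith
  show ?thesis
  proof (cases "EU u z = EU u z'")
    case True then show ?thesis using e1 e2 z by force
  next
    case False
    define l where "l = (t - EU u z) / (EU u z' - EU u z)"
    have l: "0 \<le> l" "l \<le> 1" using e1 e2 False by (auto simp: l_def field_simps)
    have "EU u (mix l z' z) = l * EU u z' + (1 - l) * EU u z" by (rule EU_mix[OF z(2) z(1)])
    also have "\<dots> = EU u z + l * (EU u z' - EU u z)" by (simp add: algebra_simps)
    also have "l * (EU u z' - EU u z) = t - EU u z" using False by (simp add: l_def)
    also have "EU u z + (t - EU u z) = t" by simp
    finally show ?thesis using mix_lottery[OF z(2) z(1) l] by blast
  qed
qed

lemma V_eq:
  fixes c c' :: "('s::finite \<Rightarrow> real) \<Rightarrow> ereal"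
  assumes r1: "parsimonious_rep P \<pi>0 \<pi>1 (R :: ('s \<Rightarrow> real \<Rightarrow> real) \<Rightarrow> _ \<Rightarrow> bool) c u"
    and r2: "parsimonious_rep P \<pi>0 \<pi>1 R c' u'"
    and uu: "\<forall>x\<in>P. u' x = u x" and rl: "\<forall>t. \<exists>q\<in>lotteries P. EU u q = t"
  shows "V c U = V c' U"
proof -
  have "\<forall>t. \<exists>q. q \<in> lotteries P \<and> EU u q = t" using rl by blast
  from choice[OF this] obtain L where L0: "\<forall>t. L t \<in> lotteries P \<and> EU u (L t) = t" by blast
  then have L: "\<And>t. L t \<in> lotteries P" "\<And>t. EU u (L t) = t" by auto
  define w :: "'s \<Rightarrow> real \<Rightarrow> real" where "w = (\<lambda>s. L (U s))"
  have w: "w \<in> contracts P" using L by (simp add: w_def contracts_def)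
  have v1: "contract_value c u w = V c U" unfolding contract_value_V w_def L by simp
  have v2: "contract_value c' u' w = V c' U" unfolding contract_value_V w_def
    using EU_cong[OF L(1) uu] L(2) by simp
  have nn: "\<forall>p\<in>prob_simplex. 0 \<le> c p" and g: "grounded c"
    using r1 by (auto simp: parsimonious_rep_def)
  obtain k where k: "V c U = ereal k" using V_finite[OF nn g] by blast
  have q: "const (L k) \<in> contracts P" using L const_contract by blast
  have c1: "contract_value c u (const (L k)) = ereal k" using cv_const[OF r1] L by simp
  have "R w (const (L k))" "R (const (L k)) w"
    using rep_iff[OF r1 w q] rep_iff[OF r1 q w] v1 k c1 by auto
  then have "contract_value c' u' w = contract_value c' u' (const (L k))"
    using rep_iff[OF r2 w q] rep_iff[OF r2 q w] by (meson order_antisym)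
  also have "\<dots> = ereal k" using cv_const[OF r2] EU_cong[OF L(1) uu] L by simp
  finally show ?thesis using v2 k by simp
qed



lemma vec_nth_lambda[simp]: "vec_nth (vec_lambda f) = f"
  by (rule ext) simp

lemma simplex_mix:
  assumes "p \<in> prob_simplex" "q \<in> prob_simplex" "0 \<le> a" "a \<le> 1"
  shows "(\<lambda>s. a * p s + (1 - a) * q s) \<in> prob_simplex"
  using assms by (auto simp: prob_simplex_def sum.distrib sum_distrib_left[symmetric])

lemma minorant:
  fixes c :: "('s::finite \<Rightarrow> real) \<Rightarrow> ereal"
  assumes nn: "\<forall>p\<in>prob_simplex. 0 \<le> c p" and g: "grounded c" and cv: "convex_cost c"
    and l: "lsc_cost c" and p0: "p0 \<in> prob_simplex" and r: "ereal r < c p0"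
  shows "\<exists>U. \<forall>p\<in>prob_simplex. \<forall>t. c p \<le> ereal t \<longrightarrow> r + (\<Sum>s\<in>UNIV. U s * (p s - p0 s)) \<le> t"
proof -
  define E :: "((real^'s) \<times> real) set" where
    "E = {(v, t). (\<lambda>s. v$s) \<in> prob_simplex \<and> c (\<lambda>s. v$s) \<le> ereal t}"
  have cvx: "convex E"
    unfolding convex_alt
  proof (intro ballI allI impI)
    fix x y :: "(real^'s) \<times> real" and u :: real
    assume x: "x \<in> E" and y: "y \<in> E" and u: "0 \<le> u \<and> u \<le> 1"
    obtain v1 t1 where x': "x = (v1, t1)" by (cases x)
    obtain v2 t2 where y': "y = (v2, t2)" by (cases y)
    define p1 where "p1 = (\<lambda>s. v1$s)"
    define p2 where "p2 = (\<lambda>s. v2$s)"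
    have p1: "p1 \<in> prob_simplex" "c p1 \<le> ereal t1" using x x' by (auto simp: E_def p1_def)
    have p2: "p2 \<in> prob_simplex" "c p2 \<le> ereal t2" using y y' by (auto simp: E_def p2_def)
    define w where "w = (1 - u) *\<^sub>R v1 + u *\<^sub>R v2"
    have eq: "vec_nth w = (\<lambda>s. u * p2 s + (1 - u) * p1 s)"
      by (rule ext) (simp add: w_def p1_def p2_def)
    have "c (\<lambda>s. u * p2 s + (1 - u) * p1 s) \<le> ereal u * c p2 + ereal (1 - u) * c p1"
      using cv p1 p2 u unfolding convex_cost_def by blast
    also have "\<dots> \<le> ereal u * ereal t2 + ereal (1 - u) * ereal t1"
      by (intro add_mono ereal_mult_left_mono) (use u p1 p2 in auto)
    also have "\<dots> = ereal ((1 - u) * t1 + u * t2)" by simp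
    finally have "c (\<lambda>s. u * p2 s + (1 - u) * p1 s) \<le> ereal ((1 - u) * t1 + u * t2)" .
    moreover have "(\<lambda>s. u * p2 s + (1 - u) * p1 s) \<in> prob_simplex"
      using simplex_mix[OF p2(1) p1(1)] u by simp
    ultimately have "(w, (1 - u) * t1 + u * t2) \<in> E"
      unfolding E_def using eq by simp
    then show "(1 - u) *\<^sub>R x + u *\<^sub>R y \<in> E"
      unfolding x' y' w_def by simp
  qed
  have cl: "closed E"
    unfolding closed_sequential_limits
  proof (intro allI impI)
    fix X :: "nat \<Rightarrow> (real^'s) \<times> real" and L
    assume a: "(\<forall>n. X n \<in> E) \<and> X \<longlonglongrightarrow> L"
    obtain v t where L: "L = (v, t)" by (cases L)
    define pn where "pn = (\<lambda>n s. fst (X n) $ s)"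
    define p where "p = (\<lambda>s. v $ s)"
    have xn: "pn n \<in> prob_simplex" "c (pn n) \<le> ereal (snd (X n))" for n
      using a unfolding E_def pn_def by (auto simp: case_prod_unfold)
    have cf: "(\<lambda>n. fst (X n)) \<longlonglongrightarrow> v" using a L tendsto_fst by fastforce
    have cs: "(\<lambda>n. snd (X n)) \<longlonglongrightarrow> t" using a L tendsto_snd by fastforce
    have cp: "(\<lambda>n. pn n s) \<longlonglongrightarrow> p s" for s
      unfolding pn_def p_def by (intro tendsto_vec_nth cf)
    have pnn: "0 \<le> p s" for s
      by (rule LIMSEQ_le_const[OF cp]) (use xn in \<open>auto simp: prob_simplex_def\<close>)
    have "(\<lambda>n. \<Sum>s\<in>UNIV. pn n s) \<longlonglongrightarrow> (\<Sum>s\<in>UNIV. p s)"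
      by (intro tendsto_sum cp)
    moreover have "(\<lambda>n. \<Sum>s\<in>UNIV. pn n s) = (\<lambda>n. 1)"
      using xn by (auto simp: prob_simplex_def)
    ultimately have "(\<Sum>s\<in>UNIV. p s) = 1"
      using LIMSEQ_unique tendsto_const by metis
    with pnn have ps: "p \<in> prob_simplex" by (simp add: prob_simplex_def)
    have "c p \<le> liminf (\<lambda>n. c (pn n))"
      using l ps xn cp unfolding lsc_cost_def by blast
    also have "\<dots> \<le> liminf (\<lambda>n. ereal (snd (X n)))"
      by (rule Liminf_mono) (use xn in auto)
    also have "\<dots> = ereal t"
      by (rule lim_imp_Liminf) (use cs in auto)
    finally show "L \<in> E" using ps unfolding L E_def p_def by simp
  qed
  define z :: "(real^'s) \<times> real" where "z = (\<chi> s. p0 s, r)"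
  have zE: "z \<notin> E" using r by (auto simp: z_def E_def not_le)
  obtain a b where ab: "inner a z < b" "\<forall>x\<in>E. b < inner a x"
    using separating_hyperplane_closed_point[OF cvx cl zE] by blast
  obtain A \<beta> where a: "a = (A, \<beta>)" by (cases a)
  have key: "b < (\<Sum>s\<in>UNIV. A$s * p s) + \<beta> * t" if "p \<in> prob_simplex" "c p \<le> ereal t" for p t
  proof -
    have "(\<chi> s. p s, t) \<in> E" using that by (simp add: E_def)
    with ab(2) show ?thesis by (auto simp: a inner_prod_def inner_vec_def mult.commute)
  qed
  have h0: "(\<Sum>s\<in>UNIV. A$s * p0 s) + \<beta> * r < b"
    using ab(1) by (simp add: a z_def inner_prod_def inner_vec_def mult.commute)
  obtain p1 where p1: "p1 \<in> prob_simplex" "c p1 < 1" using grounded_ex[OF g] by blast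
  define S1 where "S1 = (\<Sum>s\<in>UNIV. A$s * p1 s)"
  have b0: "0 \<le> \<beta>"
  proof (rule ccontr)
    assume "\<not> 0 \<le> \<beta>"
    then have bn: "\<beta> < 0" by simp
    define t where "t = max 1 ((S1 - b) / (- \<beta>))"
    have "1 \<le> t" by (simp add: t_def)
    then have "(1::ereal) \<le> ereal t" by simp
    then have "c p1 \<le> ereal t" using p1(2) by (meson order.strict_implies_order order_trans)
    from key[OF p1(1) this] have "b < S1 + \<beta> * t" by (simp add: S1_def)
    moreover have "(S1 - b) / (- \<beta>) \<le> t" by (simp add: t_def)
    then have "(S1 - b) \<le> t * (- \<beta>)" using bn by (simp add: field_simps)
    ultimately show False by (simp add: algebra_simps)
  qed
  have lin: "(\<Sum>s\<in>UNIV. (k * A$s) * (p s - p0 s)) =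
      k * ((\<Sum>s\<in>UNIV. A$s * p s) - (\<Sum>s\<in>UNIV. A$s * p0 s))" for k p
    by (simp add: sum_distrib_left sum_subtractf algebra_simps)
  show ?thesis
  proof (cases "\<beta> = 0")
    case False
    with b0 have bp: "0 < \<beta>" by simp
    show ?thesis
    proof (intro exI ballI allI impI)
      fix p t assume p: "p \<in> prob_simplex" and ct: "c p \<le> ereal t"
      have k: "b < (\<Sum>s\<in>UNIV. A$s * p s) + \<beta> * t" by (rule key[OF p ct])
      have e: "(\<Sum>s\<in>UNIV. (- 1 / \<beta> * A$s) * (p s - p0 s)) =
          - 1 / \<beta> * ((\<Sum>s\<in>UNIV. A$s * p s) - (\<Sum>s\<in>UNIV. A$s * p0 s))" by (rule lin)
      have "\<beta> * r - ((\<Sum>s\<in>UNIV. A$s * p s) - (\<Sum>s\<in>UNIV. A$s * p0 s)) \<le> \<beta> * t"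
        using k h0 by linarith
      then have "r + - 1 / \<beta> * ((\<Sum>s\<in>UNIV. A$s * p s) - (\<Sum>s\<in>UNIV. A$s * p0 s)) \<le> t"
        using bp by (simp add: field_simps)
      then show "r + (\<Sum>s\<in>UNIV. (- 1 / \<beta> * A$s) * (p s - p0 s)) \<le> t" using e by simp
    qed
  next
    case True
    define S0 where "S0 = (\<Sum>s\<in>UNIV. A$s * p0 s)"
    have h0': "S0 < b" using h0 True by (simp add: S0_def)
    define k where "k = max 0 (r / (b - S0))"
    have k0: "0 \<le> k" by (simp add: k_def)
    have kr: "r \<le> k * (b - S0)"
    proof -
      have "r / (b - S0) \<le> k" by (simp add: k_def)
      then show ?thesis using h0' by (simp add: field_simps)
    qed
    show ?thesis
    proof (intro exI ballI allI impI)
      fix p t assume p: "p \<in> prob_simplex" and ct: "c p \<le> ereal t"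
      have k1: "b < (\<Sum>s\<in>UNIV. A$s * p s)" using key[OF p ct] True by simp
      have t0: "0 \<le> t" using nn p ct by (metis ereal_less_eq(5) order_trans)
      have e: "(\<Sum>s\<in>UNIV. (- k * A$s) * (p s - p0 s)) =
          - k * ((\<Sum>s\<in>UNIV. A$s * p s) - S0)" unfolding S0_def by (rule lin)
      have "k * (b - S0) \<le> k * ((\<Sum>s\<in>UNIV. A$s * p s) - S0)"
        using k0 k1 by (intro mult_left_mono) auto
      then have "r + - k * ((\<Sum>s\<in>UNIV. A$s * p s) - S0) \<le> t" using kr t0 by simp
      then show "r + (\<Sum>s\<in>UNIV. (- k * A$s) * (p s - p0 s)) \<le> t" using e by simp
    qed
  qed
qed

lemma c_le:
  fixes c c' :: "('s::finite \<Rightarrow> real) \<Rightarrow> ereal"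
  assumes nn: "\<forall>p\<in>prob_simplex. 0 \<le> c p" and g: "grounded c" and cv: "convex_cost c"
    and l: "lsc_cost c" and nn': "\<forall>p\<in>prob_simplex. 0 \<le> c' p"
    and VV: "\<And>U. V c U = V c' U" and p0: "p0 \<in> prob_simplex"
  shows "c p0 \<le> c' p0"
proof (rule ccontr)
  assume "\<not> c p0 \<le> c' p0"
  then have lt: "c' p0 < c p0" by simp
  then obtain r where r: "c' p0 < ereal r" "ereal r < c p0" using ereal_dense2 by blast
  obtain U where U: "\<forall>p\<in>prob_simplex. \<forall>t. c p \<le> ereal t \<longrightarrow> r + (\<Sum>s\<in>UNIV. U s * (p s - p0 s)) \<le> t"
    using minorant[OF nn g cv l p0 r(2)] by blast
  define S0 where "S0 = (\<Sum>s\<in>UNIV. U s * p0 s)"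
  have bound: "V c U \<le> ereal (S0 - r)"
    unfolding V_def
  proof (rule SUP_least)
    fix p :: "'s \<Rightarrow> real" assume p: "p \<in> prob_simplex"
    show "- c p + ereal (\<Sum>s\<in>UNIV. U s * p s) \<le> ereal (S0 - r)"
    proof (cases "c p")
      case (real t)
      have "r + (\<Sum>s\<in>UNIV. U s * (p s - p0 s)) \<le> t" using U p real by auto
      moreover have "(\<Sum>s\<in>UNIV. U s * (p s - p0 s)) = (\<Sum>s\<in>UNIV. U s * p s) - S0"
        by (simp add: S0_def right_diff_distrib sum_subtractf)
      ultimately show ?thesis using real by simp
    qed (use nn p in auto)
  qed
  have "c' p0 \<noteq> -\<infinity>" using nn' p0 by auto
  moreover have "c' p0 \<noteq> \<infinity>" using r by auto
  ultimately obtain t' where t': "c' p0 = ereal t'" by (cases "c' p0") auto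
  have "- c' p0 + ereal S0 \<le> V c' U" unfolding V_def S0_def using p0 by (rule SUP_upper)
  then have h1: "ereal (S0 - t') \<le> V c' U" using t' by simp
  have h2: "V c' U \<le> ereal (S0 - r)" using bound VV by simp
  have "ereal (S0 - t') \<le> ereal (S0 - r)" using order_trans[OF h1 h2] .
  then have "r \<le> t'" by simp
  with r(1) t' show False by simp
qed


theorem proposition2:
  fixes P :: "real set" and \<pi>0 \<pi>1 :: real
    and R :: "('s::finite \<Rightarrow> (real \<Rightarrow> real)) \<Rightarrow> ('s \<Rightarrow> (real \<Rightarrow> real)) \<Rightarrow> bool"
  assumes "convex P" and "\<pi>0 \<in> P" and "\<pi>1 \<in> P" and "\<pi>0 < \<pi>1"
    and "moral_hazard_pref P \<pi>0 \<pi>1 R"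
    and "unbounded P R"
  shows "\<exists>c u. parsimonious_rep P \<pi>0 \<pi>1 R c u \<and>
           (\<forall>c' u'. parsimonious_rep P \<pi>0 \<pi>1 R c' u' \<longrightarrow>
              (\<forall>p\<in>prob_simplex. c' p = c p) \<and> (\<forall>x\<in>P. u' x = u x))"
proof -
  obtain c u where r: "parsimonious_rep P \<pi>0 \<pi>1 R c u"
    using assms(5) unfolding moral_hazard_pref_def by blast
  have rl: "\<forall>t. \<exists>q\<in>lotteries P. EU u q = t" using realize[OF r assms(6)] by blast
  show ?thesis
  proof (intro exI conjI allI impI)
    show "parsimonious_rep P \<pi>0 \<pi>1 R c u" by (rule r)
    fix c' u' assume r2: "parsimonious_rep P \<pi>0 \<pi>1 R c' u'"
    show uu: "\<forall>x\<in>P. u' x = u x" using u_unique[OF r r2 assms(2,3,4)] by blast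
    have VV: "\<And>U. V c U = V c' U" by (rule V_eq[OF r r2 uu rl])
    have nn: "\<forall>p\<in>prob_simplex. 0 \<le> c p" and g: "grounded c" and cv: "convex_cost c" and l: "lsc_cost c"
      using r by (simp_all add: parsimonious_rep_def)
    have nn': "\<forall>p\<in>prob_simplex. 0 \<le> c' p" and g': "grounded c'" and cv': "convex_cost c'"
      and l': "lsc_cost c'"
      using r2 by (simp_all add: parsimonious_rep_def)
    show "\<forall>p\<in>prob_simplex. c' p = c p"
    proof
      fix p :: "'s \<Rightarrow> real" assume p: "p \<in> prob_simplex"
      have "c p \<le> c' p" by (rule c_le[OF nn g cv l nn' VV p])
      moreover have "c' p \<le> c p" by (rule c_le[OF nn' g' cv' l' nn VV[symmetric] p])
      ultimately show "c' p = c p" by simp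
    qed
  qed
qed

end
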